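(* There exists a non-commutative bilinear algorithm computing the product of two $7\times 7$ matrices using $250$ multiplications. That is, $\langle 7,7,7\rangle\leq 250$.
   Context: Fix a field $\mathbb{K}$. A non-commutative bilinear algorithm for multiplying an $a\times b$ matrix $A$ by a $b\times c$ matrix $B$ using $r$ multiplications consists of $r$ products $t_k=\big(\sum_{i,j}\alpha^{(k)}_{ij}a_{ij}\big)\big(\sum_{j,l}\beta^{(k)}_{jl}b_{jl}\big)$ with scalars $\alpha^{(k)}_{ij},\beta^{(k)}_{jl}\in\mathbb{K}$, together with scalars $\gamma^{(k)}_{il}\in\mathbb{K}$ such that $(AB)_{il}=\sum_{k=1}^r\gamma^{(k)}_{il}t_k$ for all $i,l$. This identity must hold when the entries of $A$ and $B$ lie in an arbitrary, not necessarily commutative, associative $\mathbb{K}$-algebra. The quantity $\langle a,b,c\rangle$ denotes the minimal such $r$, i.e. the tensor rank of the matrix multiplication tensor of format $(a,b,c)$. *)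

theory Defs
  imports Main
begin

text \<open>A bilinear algorithm for multiplying an a x b matrix A by a b x c matrix B with r
products t_k = (sum alpha k i j * A i j) (sum beta k j l * B j l), and outputs
(AB) i l = sum_k gamma k i l * t_k.
Validity over an arbitrary (non-commutative) associative K-algebra is equivalent to
equality of coefficients of every noncommutative monomial A i' j * B j' l' in the
free algebra, which is the following tensor identity (the matrix multiplication
tensor decomposition).\<close>

definition bilinear_mm_algorithm ::
  "nat \<Rightarrow> nat \<Rightarrow> nat \<Rightarrow> nat \<Rightarrow> (nat \<Rightarrow> nat \<Rightarrow> nat \<Rightarrow> 'k::field)
   \<Rightarrow> (nat \<Rightarrow> nat \<Rightarrow> nat \<Rightarrow> 'k) \<Rightarrow> (nat \<Rightarrow> nat \<Rightarrow> nat \<Rightarrow> 'k) \<Rightarrow> bool"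
where
  "bilinear_mm_algorithm a b c r alpha beta gamma \<longleftrightarrow>
     (\<forall>i<a. \<forall>l<c. \<forall>i'<a. \<forall>j<b. \<forall>j'<b. \<forall>l'<c.
        (\<Sum>k<r. gamma k i l * alpha k i' j * beta k j' l') =
        (if i' = i \<and> j = j' \<and> l' = l then 1 else 0))"

definition mm_rank :: "'k::field itself \<Rightarrow> nat \<Rightarrow> nat \<Rightarrow> nat \<Rightarrow> nat" where
  "mm_rank _ a b c = (LEAST r. \<exists>(alpha::nat \<Rightarrow> nat \<Rightarrow> nat \<Rightarrow> 'k) beta gamma.
                         bilinear_mm_algorithm a b c r alpha beta gamma)"

end

theory Submission
  imports Defs
begin


definition vv :: "int list \<Rightarrow> nat \<Rightarrow> int" where
  "vv v t = (if t < length v then v ! t else 0)"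

definition stepF :: "nat \<Rightarrow> nat \<Rightarrow> (int list \<times> int list \<times> int list) \<Rightarrow> int list \<Rightarrow> int list" where
  "stepF c a t acc = (let w = vv (snd (snd t)) c * vv (fst t) a in
     if w = 0 then acc else map2 (\<lambda>u v. u + w * v) acc (fst (snd t)))"

definition rowsum :: "(int list \<times> int list \<times> int list) list \<Rightarrow> nat \<Rightarrow> nat \<Rightarrow> nat \<Rightarrow> int list" where
  "rowsum S c a N = fold (stepF c a) S (replicate N 0)"

lemma fold_stepF:
  assumes "\<forall>t\<in>set S. length (fst (snd t)) = N" "length acc = N" "b < N"
  shows "length (fold (stepF c a) S acc) = N \<and>
         fold (stepF c a) S acc ! b = acc ! b +
           sum_list (map (\<lambda>t. vv (snd (snd t)) c * vv (fst t) a * vv (fst (snd t)) b) S)"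
  using assms
proof (induction S arbitrary: acc)
  case Nil then show ?case by simp
next
  case (Cons t S)
  have lt: "length (fst (snd t)) = N" using Cons.prems by simp
  have l1: "length (stepF c a t acc) = N" using lt Cons.prems by (simp add: stepF_def Let_def)
  have e1: "stepF c a t acc ! b = acc ! b + vv (snd (snd t)) c * vv (fst t) a * vv (fst (snd t)) b"
    using lt Cons.prems by (simp add: stepF_def Let_def vv_def)
  have IH: "length (fold (stepF c a) S (stepF c a t acc)) = N \<and>
      fold (stepF c a) S (stepF c a t acc) ! b = stepF c a t acc ! b +
        sum_list (map (\<lambda>t. vv (snd (snd t)) c * vv (fst t) a * vv (fst (snd t)) b) S)"
    using Cons.IH[of "stepF c a t acc"] Cons.prems l1 by simp
  show ?case using IH e1 by simp
qed

definition idxs :: "nat \<Rightarrow> nat \<Rightarrow> nat \<Rightarrow> (nat \<times> nat \<times> nat \<times> nat) list" where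
  "idxs n m p = concat (map (\<lambda>i. concat (map (\<lambda>l. concat (map (\<lambda>i'. map (\<lambda>j. (i,l,i',j)) [0..<m]) [0..<n])) [0..<p])) [0..<n])"

lemma mem_idxs: "i < n \<Longrightarrow> l < p \<Longrightarrow> i' < n \<Longrightarrow> j < m \<Longrightarrow> (i,l,i',j) \<in> set (idxs n m p)"
  unfolding idxs_def by force

definition target :: "nat \<Rightarrow> nat \<Rightarrow> nat \<Rightarrow> nat \<Rightarrow> nat \<Rightarrow> nat \<Rightarrow> int list" where
  "target m p i l i' j = (if i = i' then map (\<lambda>b. if b = j*p+l then 1 else 0) [0..<m*p] else replicate (m*p) 0)"

definition lenok :: "nat \<Rightarrow> (int list \<times> int list \<times> int list) \<Rightarrow> bool" where
  "lenok N t \<longleftrightarrow> length (fst (snd t)) = N"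

fun chkrows :: "(int list \<times> int list \<times> int list) list \<Rightarrow> nat \<Rightarrow> nat \<Rightarrow> (nat \<times> nat \<times> nat \<times> nat) list \<Rightarrow> bool" where
  "chkrows S m p [] = True"
| "chkrows S m p ((i,l,i',j) # r) = (rowsum S (i*p+l) (i'*m+j) (m*p) = target m p i l i' j \<and> chkrows S m p r)"

lemma chkrows_iff: "chkrows S m p L \<longleftrightarrow> (\<forall>(i,l,i',j)\<in>set L. rowsum S (i*p+l) (i'*m+j) (m*p) = target m p i l i' j)"
  by (induction S m p L rule: chkrows.induct) auto

definition check :: "nat \<Rightarrow> nat \<Rightarrow> nat \<Rightarrow> (int list \<times> int list \<times> int list) list \<Rightarrow> bool" where
  "check n m p S \<longleftrightarrow> list_all (lenok (m*p)) S \<and> chkrows S m p (idxs n m p)"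

lemma mult_add_inj:
  fixes a b c d p :: nat
  assumes "b < p" "d < p"
  shows "a*p + b = c*p + d \<longleftrightarrow> a = c \<and> b = d"
proof
  assume h: "a*p + b = c*p + d"
  have "(a*p+b) div p = a" "(a*p+b) mod p = b" using assms by auto
  moreover have "(c*p+d) div p = c" "(c*p+d) mod p = d" using assms by auto
  ultimately show "a = c \<and> b = d" using h by metis
qed auto

lemma idx_lt:
  fixes j l m p :: nat
  assumes "j < m" "l < p"
  shows "j*p + l < m*p"
proof -
  have "j*p + l < j*p + p" using assms by simp
  also have "\<dots> = (Suc j) * p" by simp
  also have "\<dots> \<le> m * p" using assms by (intro mult_right_mono) auto
  finally show ?thesis .
qed

definition alp :: "(int list \<times> int list \<times> int list) list \<Rightarrow> nat \<Rightarrow> nat \<Rightarrow> nat \<Rightarrow> nat \<Rightarrow> 'k::field" where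
  "alp S m k i j = of_int (vv (fst (S!k)) (i*m+j))"
definition bet :: "(int list \<times> int list \<times> int list) list \<Rightarrow> nat \<Rightarrow> nat \<Rightarrow> nat \<Rightarrow> nat \<Rightarrow> 'k::field" where
  "bet S p k j l = of_int (vv (fst (snd (S!k))) (j*p+l))"
definition gam :: "(int list \<times> int list \<times> int list) list \<Rightarrow> nat \<Rightarrow> nat \<Rightarrow> nat \<Rightarrow> nat \<Rightarrow> 'k::field" where
  "gam S p k i l = of_int (vv (snd (snd (S!k))) (i*p+l))"

theorem check_sound:
  assumes "check n m p S"
  shows "bilinear_mm_algorithm n m p (length S) (alp S m) (bet S p) (gam S p :: nat \<Rightarrow> nat \<Rightarrow> nat \<Rightarrow> 'k::field)"
  unfolding bilinear_mm_algorithm_def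
proof (intro allI impI)
  fix i l i' j j' l'
  assume h: "i < n" "l < p" "i' < n" "j < m" "j' < m" "l' < p"
  have len: "\<forall>t\<in>set S. length (fst (snd t)) = m*p" using assms by (simp add: check_def list_all_iff lenok_def)
  have row: "rowsum S (i*p+l) (i'*m+j) (m*p) = target m p i l i' j"
    using assms mem_idxs[OF h(1) h(2) h(3) h(4)] unfolding check_def chkrows_iff by fastforce
  have b: "j'*p+l' < m*p" using h idx_lt by blast
  have "(\<Sum>k<length S. vv (snd (snd (S!k))) (i*p+l) * vv (fst (S!k)) (i'*m+j) * vv (fst (snd (S!k))) (j'*p+l'))
      = sum_list (map (\<lambda>t. vv (snd (snd t)) (i*p+l) * vv (fst t) (i'*m+j) * vv (fst (snd t)) (j'*p+l')) S)"
    by (simp add: sum_list_sum_nth atLeast0LessThan)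
  also have "\<dots> = rowsum S (i*p+l) (i'*m+j) (m*p) ! (j'*p+l')"
    using fold_stepF[OF len _ b, of "replicate (m*p) 0" "i*p+l" "i'*m+j"] b
    by (simp add: rowsum_def)
  also have "\<dots> = target m p i l i' j ! (j'*p+l')" by (simp add: row)
  also have "\<dots> = (if i' = i \<and> j = j' \<and> l' = l then 1 else 0)"
  proof -
    have "(j'*p+l' = j*p+l) \<longleftrightarrow> (j' = j \<and> l' = l)" using mult_add_inj h by blast
    then show ?thesis using b by (auto simp: target_def)
  qed
  finally have e: "(\<Sum>k<length S. vv (snd (snd (S!k))) (i*p+l) * vv (fst (S!k)) (i'*m+j) * vv (fst (snd (S!k))) (j'*p+l'))
      = (if i' = i \<and> j = j' \<and> l' = l then 1 else 0)" .
  have "(\<Sum>k<length S. gam S p k i l * alp S m k i' j * bet S p k j' l' :: 'k) =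
        of_int (\<Sum>k<length S. vv (snd (snd (S!k))) (i*p+l) * vv (fst (S!k)) (i'*m+j) * vv (fst (snd (S!k))) (j'*p+l'))"
    by (simp add: alp_def bet_def gam_def)
  also have "\<dots> = (if i' = i \<and> j = j' \<and> l' = l then 1 else 0)" by (simp add: e)
  finally show "(\<Sum>k<length S. gam S p k i l * alp S m k i' j * bet S p k j' l' :: 'k) =
        (if i' = i \<and> j = j' \<and> l' = l then 1 else 0)" .
qed



lemma sum_split_add:
  fixes f :: "nat \<Rightarrow> 'a::comm_monoid_add"
  shows "(\<Sum>K<A+B. f K) = (\<Sum>K<A. f K) + (\<Sum>m<B. f (A+m))"
  by (induction B) (auto simp: add.assoc)

lemma sum_blocks:
  fixes f :: "nat \<Rightarrow> 'a::comm_monoid_add" and R :: nat and rk :: "nat \<Rightarrow> nat"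
  shows "(\<Sum>K < (\<Sum>k<R. rk k). f K) = (\<Sum>k<R. \<Sum>m<rk k. f ((\<Sum>k'<k. rk k') + m))"
proof (induction R)
  case 0 then show ?case by simp
next
  case (Suc R)
  have "(\<Sum>K < (\<Sum>k<Suc R. rk k). f K) = (\<Sum>K < (\<Sum>k<R. rk k) + rk R. f K)" by simp
  also have "\<dots> = (\<Sum>K < (\<Sum>k<R. rk k). f K) + (\<Sum>m<rk R. f ((\<Sum>k'<R. rk k') + m))"
    by (rule sum_split_add)
  finally show ?case using Suc by simp
qed

theorem compose:
  fixes ao bo go :: "nat \<Rightarrow> nat \<Rightarrow> nat \<Rightarrow> 'k::field"
    and ai bi gi :: "nat \<Rightarrow> nat \<Rightarrow> nat \<Rightarrow> nat \<Rightarrow> 'k"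
    and bI oI sI bJ oJ sJ bL oL sL Pk Qk Rk rk dk dm :: "nat \<Rightarrow> nat"
  assumes outer: "bilinear_mm_algorithm N M P R0 ao bo go"
    and inner: "\<forall>k<R0. bilinear_mm_algorithm (Pk k) (Qk k) (Rk k) (rk k) (ai k) (bi k) (gi k)"
    and rI: "\<forall>g<a. bI g < N \<and> oI g < sI (bI g)"
    and iI: "\<forall>g<a. \<forall>g'<a. bI g = bI g' \<and> oI g = oI g' \<longrightarrow> g = g'"
    and rJ: "\<forall>g<b. bJ g < M \<and> oJ g < sJ (bJ g)"
    and iJ: "\<forall>g<b. \<forall>g'<b. bJ g = bJ g' \<and> oJ g = oJ g' \<longrightarrow> g = g'"
    and rL: "\<forall>g<c. bL g < P \<and> oL g < sL (bL g)"
    and iL: "\<forall>g<c. \<forall>g'<c. bL g = bL g' \<and> oL g = oL g' \<longrightarrow> g = g'"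
    and HI: "\<forall>k<R0. \<forall>I<N. \<forall>I'<N. \<forall>J<M. \<forall>L<P. ao k I' J \<noteq> 0 \<longrightarrow> go k I L \<noteq> 0 \<longrightarrow> min (sI I) (sI I') \<le> Pk k"
    and HJ: "\<forall>k<R0. \<forall>J<M. \<forall>J'<M. \<forall>I<N. \<forall>L<P. ao k I J \<noteq> 0 \<longrightarrow> bo k J' L \<noteq> 0 \<longrightarrow> min (sJ J) (sJ J') \<le> Qk k"
    and HL: "\<forall>k<R0. \<forall>L<P. \<forall>L'<P. \<forall>I<N. \<forall>J<M. bo k J L' \<noteq> 0 \<longrightarrow> go k I L \<noteq> 0 \<longrightarrow> min (sL L) (sL L') \<le> Rk k"
    and dec: "\<forall>k<R0. \<forall>m<rk k. dk ((\<Sum>k'<k. rk k') + m) = k \<and> dm ((\<Sum>k'<k. rk k') + m) = m"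
  shows "bilinear_mm_algorithm a b c (\<Sum>k<R0. rk k)
    (\<lambda>K g1 g2. ao (dk K) (bI g1) (bJ g2) * (if oI g1 < Pk (dk K) \<and> oJ g2 < Qk (dk K) then ai (dk K) (dm K) (oI g1) (oJ g2) else 0))
    (\<lambda>K g2 g3. bo (dk K) (bJ g2) (bL g3) * (if oJ g2 < Qk (dk K) \<and> oL g3 < Rk (dk K) then bi (dk K) (dm K) (oJ g2) (oL g3) else 0))
    (\<lambda>K g1 g3. go (dk K) (bI g1) (bL g3) * (if oI g1 < Pk (dk K) \<and> oL g3 < Rk (dk K) then gi (dk K) (dm K) (oI g1) (oL g3) else 0))"
  unfolding bilinear_mm_algorithm_def
proof (intro allI impI)
  fix i l i' j j' l'
  assume h: "i < a" "l < c" "i' < a" "j < b" "j' < b" "l' < c"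
  define x where "x = oI i"
  define x' where "x' = oI i'"
  define y where "y = oJ j"
  define y' where "y' = oJ j'"
  define z where "z = oL l"
  define z' where "z' = oL l'"
  define I where "I = bI i"
  define I' where "I' = bI i'"
  define J where "J = bJ j"
  define J' where "J' = bJ j'"
  define L where "L = bL l"
  define L' where "L' = bL l'"
  have rng: "I < N" "I' < N" "J < M" "J' < M" "L < P" "L' < P"
    "x < sI I" "x' < sI I'" "y < sJ J" "y' < sJ J'" "z < sL L" "z' < sL L'"
    using rI rJ rL h unfolding x_def x'_def y_def y'_def z_def z'_def I_def I'_def J_def J'_def L_def L'_def
    by auto
  define Ow where "Ow k = go k I L * ao k I' J * bo k J' L'" for k
  define G where "G k = (\<Sum>m<rk k. (if x < Pk k \<and> z < Rk k then gi k m x z else 0) *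
      (if x' < Pk k \<and> y < Qk k then ai k m x' y else 0) *
      (if y' < Qk k \<and> z' < Rk k then bi k m y' z' else 0))" for k
  define D where "D = (if x' = x \<and> y = y' \<and> z' = z then 1 else (0::'k))"
  let ?F = "\<lambda>K. (go (dk K) (bI i) (bL l) * (if oI i < Pk (dk K) \<and> oL l < Rk (dk K) then gi (dk K) (dm K) (oI i) (oL l) else 0)) *
       (ao (dk K) (bI i') (bJ j) * (if oI i' < Pk (dk K) \<and> oJ j < Qk (dk K) then ai (dk K) (dm K) (oI i') (oJ j) else 0)) *
       (bo (dk K) (bJ j') (bL l') * (if oJ j' < Qk (dk K) \<and> oL l' < Rk (dk K) then bi (dk K) (dm K) (oJ j') (oL l') else 0))"
  have step1: "(\<Sum>K<(\<Sum>k<R0. rk k). ?F K) = (\<Sum>k<R0. Ow k * G k)"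
  proof -
    have "(\<Sum>K<(\<Sum>k<R0. rk k). ?F K) = (\<Sum>k<R0. \<Sum>m<rk k. ?F ((\<Sum>k'<k. rk k') + m))"
      by (rule sum_blocks)
    also have "\<dots> = (\<Sum>k<R0. Ow k * G k)"
    proof (intro sum.cong refl)
      fix k assume k: "k \<in> {..<R0}"
      have "(\<Sum>m<rk k. ?F ((\<Sum>k'<k. rk k') + m)) =
            (\<Sum>m<rk k. Ow k * ((if x < Pk k \<and> z < Rk k then gi k m x z else 0) *
              (if x' < Pk k \<and> y < Qk k then ai k m x' y else 0) *
              (if y' < Qk k \<and> z' < Rk k then bi k m y' z' else 0)))"
      proof (intro sum.cong refl)
        fix m assume m: "m \<in> {..<rk k}"
        then have d: "dk ((\<Sum>k'<k. rk k') + m) = k" "dm ((\<Sum>k'<k. rk k') + m) = m"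
          using dec k by auto
        show "?F ((\<Sum>k'<k. rk k') + m) = Ow k * ((if x < Pk k \<and> z < Rk k then gi k m x z else 0) *
              (if x' < Pk k \<and> y < Qk k then ai k m x' y else 0) *
              (if y' < Qk k \<and> z' < Rk k then bi k m y' z' else 0))"
          unfolding d Ow_def x_def x'_def y_def y'_def z_def z'_def I_def I'_def J_def J'_def L_def L'_def
          by (simp add: ac_simps)
      qed
      also have "\<dots> = Ow k * G k" unfolding G_def by (simp add: sum_distrib_left)
      finally show "(\<Sum>m<rk k. ?F ((\<Sum>k'<k. rk k') + m)) = Ow k * G k" .
    qed
    finally show ?thesis .
  qed
  have step2: "Ow k * G k = Ow k * D" if k: "k < R0" for k
  proof (cases "Ow k = 0")
    case True then show ?thesis by simp
  next
    case False
    then have nz: "go k I L \<noteq> 0" "ao k I' J \<noteq> 0" "bo k J' L' \<noteq> 0" unfolding Ow_def by auto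
    have inn: "bilinear_mm_algorithm (Pk k) (Qk k) (Rk k) (rk k) (ai k) (bi k) (gi k)" using inner k by auto
    show ?thesis
    proof (cases "x < Pk k \<and> z < Rk k \<and> x' < Pk k \<and> y < Qk k \<and> y' < Qk k \<and> z' < Rk k")
      case True
      then have "G k = (\<Sum>m<rk k. gi k m x z * ai k m x' y * bi k m y' z')"
        unfolding G_def by simp
      also have "\<dots> = D" using inn True unfolding bilinear_mm_algorithm_def D_def by auto
      finally show ?thesis by simp
    next
      case nf: False
      have "\<not> (x' = x \<and> y = y' \<and> z' = z)"
      proof
        assume e: "x' = x \<and> y = y' \<and> z' = z"
        have "min (sI I) (sI I') \<le> Pk k" using HI k rng nz by blast
        then have "x < Pk k" using rng e by auto
        moreover have "min (sJ J) (sJ J') \<le> Qk k" using HJ k rng nz by blast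
        then have "y < Qk k" using rng e by auto
        moreover have "min (sL L) (sL L') \<le> Rk k" using HL k rng nz by blast
        then have "z < Rk k" using rng e by auto
        ultimately show False using nf e by auto
      qed
      then have D0: "D = 0" unfolding D_def by auto
      have "G k = 0" unfolding G_def
        by (rule sum.neutral) (use nf in auto)
      then show ?thesis using D0 by simp
    qed
  qed
  have "(\<Sum>K<(\<Sum>k<R0. rk k). ?F K) = (\<Sum>k<R0. Ow k * D)"
    using step1 step2 by simp
  also have "\<dots> = D * (\<Sum>k<R0. Ow k)" by (simp add: sum_distrib_left mult.commute)
  also have "(\<Sum>k<R0. Ow k) = (if I' = I \<and> J = J' \<and> L' = L then 1 else 0)"
    using outer rng unfolding bilinear_mm_algorithm_def Ow_def by auto
  also have "D * (if I' = I \<and> J = J' \<and> L' = L then 1 else 0) = (if i' = i \<and> j = j' \<and> l' = l then 1 else (0::'k))"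
  proof -
    have "(x' = x \<and> y = y' \<and> z' = z \<and> I' = I \<and> J = J' \<and> L' = L) \<longleftrightarrow> (i' = i \<and> j = j' \<and> l' = l)"
      using iI iJ iL h unfolding x_def x'_def y_def y'_def z_def z'_def I_def I'_def J_def J'_def L_def L'_def
      by metis
    then show ?thesis unfolding D_def by auto
  qed
  finally show "(\<Sum>K<(\<Sum>k<R0. rk k). ?F K) = (if i' = i \<and> j = j' \<and> l' = l then 1 else 0)" .
qed


definition S2 :: "(int list \<times> int list \<times> int list) list" where
  "S2 = [
    ([0,1,0,0], [0,0,- 1,1], [0,1,0,0]),
    ([1,0,1,0], [- 1,0,1,0], [0,0,- 1,0]),
    ([0,0,0,1], [0,1,0,- 1], [0,0,0,- 1]),
    ([0,0,1,1], [0,1,0,0], [- 1,- 1,1,1]),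
    ([1,1,1,1], [0,0,1,0], [1,1,0,0]),
    ([1,0,1,1], [0,1,- 1,0], [1,1,- 1,0]),
    ([1,0,0,0], [1,- 1,0,0], [1,0,- 1,0])
  ]"


definition S334 :: "(int list \<times> int list \<times> int list) list" where
  "S334 = [
    ([0,0,0,1,0,- 1,- 2,0,1], [0,1,0,0,0,1,0,0,0,1,0,1], [0,- 1,1,0,- 1,- 1,0,- 1,0,- 1,1,0]),
    ([0,0,0,2,- 1,- 1,0,0,0], [0,0,0,0,0,1,0,0,0,0,0,0], [0,1,- 1,0,1,- 1,1,0,0,0,0,0]),
    ([- 1,0,1,0,0,0,2,0,- 2], [0,- 1,- 1,0,1,0,0,0,- 1,- 2,- 2,1], [0,0,1,0,0,0,0,0,0,0,1,0]),
    ([0,0,0,0,- 1,0,0,1,0], [- 1,0,0,1,- 1,0,0,1,- 1,0,0,1], [0,0,0,1,0,0,0,0,0,0,0,1]),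
    ([0,0,0,0,1,0,1,- 1,0], [- 1,0,0,1,- 1,0,0,0,- 1,0,0,1], [0,0,0,1,- 1,0,0,0,0,0,0,1]),
    ([0,0,0,0,0,0,- 2,0,1], [0,0,0,0,0,0,0,0,0,0,0,1], [2,2,0,2,1,1,0,1,1,1,0,1]),
    ([0,1,0,0,1,0,0,- 1,0], [0,- 1,- 1,1,0,- 1,- 1,1,0,- 1,- 1,1], [0,0,0,1,0,0,0,0,0,0,0,0]),
    ([- 1,1,0,- 1,1,0,1,- 1,0], [0,- 1,- 1,1,0,- 1,0,0,0,- 1,- 2,1], [0,0,0,0,0,0,1,0,0,0,0,0]),
    ([1,- 1,0,0,0,0,- 1,1,0], [0,0,0,0,0,1,1,0,0,0,0,0], [1,0,- 1,0,0,0,1,0,0,0,0,0]),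
    ([- 1,1,1,- 2,1,1,1,- 1,- 1], [- 1,1,2,0,- 1,1,2,0,- 1,1,2,0], [0,- 1,1,0,0,0,0,0,0,0,0,0]),
    ([1,- 1,0,0,- 1,0,- 1,1,0], [0,- 1,- 1,1,0,- 1,- 1,0,0,- 1,- 1,1], [0,0,0,1,0,0,1,0,0,0,0,0]),
    ([0,0,0,1,0,0,0,0,0], [0,- 1,0,1,0,- 1,0,0,0,- 1,0,1], [0,0,0,0,1,0,1,1,0,0,0,0]),
    ([0,0,0,2,0,- 1,- 2,0,1], [0,1,0,0,0,1,0,0,0,1,0,0], [0,0,0,0,1,1,0,1,0,0,0,0]),
    ([0,0,0,0,0,0,2,- 1,- 1], [0,0,0,0,0,0,0,0,- 1,0,0,1], [2,- 1,1,0,0,0,0,0,1,- 1,1,0]),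
    ([- 1,1,0,- 2,1,1,1,- 1,0], [0,0,0,0,0,1,0,0,0,0,1,0], [0,1,- 1,0,0,0,1,0,0,0,0,0]),
    ([0,0,0,1,0,- 1,- 1,0,1], [0,- 1,0,0,0,- 1,0,0,- 1,- 2,0,1], [0,- 1,1,0,0,0,0,0,0,- 1,1,0]),
    ([0,0,0,0,0,0,1,- 1,0], [0,0,0,0,1,0,0,0,- 1,0,0,1], [- 1,0,1,0,- 1,0,0,0,- 1,0,1,0]),
    ([0,0,0,0,0,0,1,0,0], [1,0,0,0,1,0,0,0,1,0,0,1], [1,0,0,1,0,0,0,0,1,0,0,1]),
    ([- 2,1,1,0,0,0,4,- 2,- 2], [0,0,0,0,1,1,1,0,0,0,0,0], [1,0,0,0,0,0,0,0,0,0,0,0]),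
    ([2,0,- 1,0,0,0,- 4,0,2], [0,1,1,0,0,1,1,0,0,1,1,0], [1,1,0,1,0,0,0,0,0,0,0,0]),
    ([1,0,- 1,0,0,0,- 1,0,1], [0,0,0,0,0,0,0,0,0,- 1,- 1,1], [0,1,1,0,0,0,0,0,0,0,1,0]),
    ([0,0,0,- 1,0,1,0,0,0], [0,0,0,0,0,1,0,0,0,- 1,0,1], [0,- 1,1,0,0,- 1,0,0,0,- 1,1,0]),
    ([0,0,0,- 1,0,1,- 1,1,0], [0,0,0,0,0,- 1,0,0,- 1,0,0,1], [0,- 1,1,0,- 1,0,0,0,0,- 1,1,0]),
    ([2,- 1,- 1,2,- 1,- 1,- 2,1,1], [- 1,1,2,0,- 1,1,2,0,- 1,1,1,0], [0,- 1,1,0,0,0,0,0,0,0,0,0]),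
    ([0,0,0,- 1,1,0,1,- 1,0], [- 1,0,0,1,0,1,0,0,- 1,0,0,1], [0,0,0,0,1,0,0,0,0,0,0,0]),
    ([- 1,0,0,0,0,0,1,0,0], [- 1,1,1,0,- 1,1,1,0,- 1,1,1,0], [1,- 1,1,0,0,0,0,0,0,0,0,0]),
    ([1,0,- 1,0,0,0,- 3,1,2], [0,0,0,0,1,1,1,0,- 1,0,0,1], [1,0,1,0,0,0,0,0,0,0,1,0]),
    ([0,0,0,0,1,0,0,0,0], [0,0,0,0,0,0,0,1,0,0,0,0], [0,0,0,0,0,0,0,1,0,0,0,1]),
    ([- 1,0,1,0,0,0,3,0,- 2], [0,1,1,0,0,1,1,0,0,1,1,1], [1,1,1,1,0,0,0,0,0,0,1,0])
  ]"


definition S344 :: "(int list \<times> int list \<times> int list) list" where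
  "S344 = [
    ([0,0,0,0,- 1,1,0,1,0,0,0,0], [0,0,0,0,0,1,1,1,0,1,1,1,0,0,0,0], [0,0,0,- 1,1,1,- 1,1,1,0,- 1,1]),
    ([1,- 1,1,- 1,0,- 1,1,0,0,1,- 1,0], [0,0,- 1,- 1,0,0,0,0,0,- 1,- 1,- 1,0,- 1,- 1,- 1], [1,1,- 1,0,0,0,0,0,0,1,0,0]),
    ([0,0,0,0,0,- 1,1,0,0,0,0,0], [0,0,0,0,0,1,0,0,0,0,0,0,0,- 1,0,0], [0,1,0,- 1,0,- 1,0,1,0,- 1,0,1]),
    ([0,0,0,0,0,- 1,0,0,0,1,0,0], [0,0,0,0,1,0,1,1,1,0,1,1,1,0,1,1], [0,0,0,0,0,0,0,0,1,0,- 1,1]),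
    ([0,0,0,0,- 1,- 1,1,0,1,1,- 1,0], [0,- 1,- 1,- 1,0,0,0,0,0,0,0,0,0,- 1,- 1,- 1], [0,0,0,- 1,- 1,0,0,1,- 1,0,1,- 1]),
    ([1,- 1,1,- 1,0,- 1,1,0,1,1,- 1,0], [1,0,1,0,0,0,0,0,0,0,0,0,0,0,0,0], [0,0,0,0,1,0,0,- 1,1,0,0,- 1]),
    ([0,0,1,0,0,- 1,1,0,0,1,- 1,0], [1,0,1,1,0,0,0,0,1,1,1,1,1,1,1,1], [1,1,- 1,0,0,0,0,0,0,0,0,0]),
    ([- 1,0,1,0,- 2,0,1,1,1,1,- 1,0], [1,0,1,1,0,0,0,0,0,0,0,0,0,0,0,0], [0,0,0,- 1,0,0,0,0,0,0,0,0]),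
    ([1,- 1,1,- 1,0,- 1,1,0,- 1,2,- 1,1], [0,1,0,0,0,0,0,0,0,0,0,0,0,0,0,0], [0,0,0,0,0,0,0,0,0,- 1,0,0]),
    ([- 1,0,0,1,0,0,0,0,0,0,0,0], [1,0,1,1,0,0,0,0,0,1,1,1,0,1,1,1], [- 1,0,1,0,0,0,0,0,0,0,0,0]),
    ([0,0,0,0,0,- 1,1,0,0,1,- 1,0], [0,1,1,1,0,0,0,0,0,0,1,1,0,1,1,1], [1,1,- 1,0,0,0,0,0,1,1,- 2,1]),
    ([- 1,1,- 1,1,0,0,0,0,0,0,0,0], [0,1,1,1,0,0,0,0,0,1,1,1,0,1,1,1], [0,- 1,1,- 1,- 1,0,0,1,- 1,- 1,0,1]),
    ([0,- 1,1,- 1,0,0,0,0,0,0,0,0], [0,1,1,1,0,0,0,0,1,0,1,1,0,1,1,1], [1,0,0,0,0,0,0,0,1,0,- 1,1]),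
    ([0,0,0,0,0,1,- 1,1,0,0,0,0], [1,1,2,1,1,0,1,0,1,0,1,0,1,1,2,1], [0,0,0,0,1,0,0,0,1,0,- 1,1]),
    ([0,0,0,0,0,1,- 1,0,0,0,0,1], [0,- 1,0,0,0,0,0,0,0,0,0,0,1,- 1,1,0], [0,0,0,0,0,0,0,0,0,0,1,- 1]),
    ([0,- 1,1,- 1,0,- 1,1,0,0,1,- 1,0], [1,1,1,1,0,0,0,0,1,0,1,1,1,1,1,1], [- 1,- 1,1,0,0,0,0,0,- 1,0,1,- 1]),
    ([0,1,- 1,1,1,1,- 1,0,- 1,- 1,1,0], [- 1,1,0,0,0,0,0,0,0,0,0,0,0,1,1,1], [0,0,0,1,0,0,0,0,1,0,- 1,1]),
    ([0,1,- 1,1,0,0,- 1,1,0,0,1,- 1], [0,- 1,0,0,0,0,0,0,0,0,0,0,- 1,- 1,- 1,- 1], [0,0,0,0,0,0,0,0,1,0,- 1,1]),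
    ([1,- 1,1,- 1,0,- 1,1,0,0,0,0,0], [1,1,2,1,0,0,0,0,0,1,1,1,0,1,1,1], [0,0,1,- 1,- 1,0,0,1,- 1,0,0,1]),
    ([0,0,0,0,0,- 1,2,- 1,0,0,0,0], [0,0,0,0,1,0,1,0,1,0,1,0,0,0,0,0], [0,0,- 1,1,1,1,0,- 1,1,1,0,- 1]),
    ([0,0,0,0,0,- 1,1,0,0,1,- 1,0], [- 1,1,0,1,0,0,0,0,- 1,0,0,1,0,1,1,1], [0,0,0,0,0,0,0,0,0,0,1,- 1]),
    ([0,0,0,0,- 1,0,0,1,0,1,0,0], [0,1,0,0,0,1,1,1,0,1,1,1,0,0,0,0], [0,0,0,0,- 1,- 1,1,0,- 1,0,1,0]),
    ([0,1,0,0,- 1,1,0,1,0,0,0,0], [1,0,1,1,0,1,1,1,0,1,1,1,0,0,0,0], [0,0,0,1,- 1,0,1,- 1,- 1,0,1,- 1]),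
    ([0,1,0,0,0,0,1,- 1,0,0,0,0], [0,1,1,0,1,0,1,0,1,0,1,0,0,1,1,0], [0,0,1,- 1,1,0,- 1,1,1,0,- 1,1]),
    ([0,1,0,0,0,1,- 1,0,0,0,0,0], [1,0,1,1,0,- 1,0,0,1,0,1,1,1,1,1,1], [0,- 1,0,1,- 1,0,1,- 1,- 1,0,1,- 1]),
    ([0,0,0,0,1,0,0,- 1,- 1,0,0,1], [0,1,0,0,0,0,0,0,0,0,0,0,0,1,1,1], [0,0,0,0,0,0,0,0,- 1,0,1,0]),
    ([0,1,0,0,0,0,0,0,0,0,0,0], [1,0,1,1,- 1,0,0,0,0,1,1,1,1,1,1,1], [- 1,0,1,- 1,1,0,- 1,1,1,0,- 1,1]),
    ([0,0,0,0,1,0,0,- 1,- 1,- 1,1,0], [1,1,2,1,0,0,0,0,0,0,0,0,0,1,1,1], [0,0,0,0,1,0,0,- 1,1,0,- 1,0]),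
    ([0,0,0,0,0,0,1,- 1,0,- 1,0,0], [0,1,0,0,1,0,1,0,1,0,1,0,0,1,0,0], [0,0,0,0,- 1,- 1,1,0,- 1,- 1,0,1]),
    ([0,0,0,0,0,- 1,1,0,0,0,0,0], [1,1,2,1,- 1,0,- 1,0,0,1,1,1,1,1,2,1], [0,0,- 1,1,0,0,1,- 1,0,0,1,- 1]),
    ([0,0,0,0,0,1,0,0,0,- 1,0,0], [0,1,0,0,0,0,- 1,- 1,0,0,- 1,- 1,0,1,0,0], [0,0,0,0,1,1,- 1,0,0,0,0,0]),
    ([0,0,0,0,1,0,0,- 1,0,0,0,0], [1,1,2,1,0,1,1,1,0,1,1,1,0,0,0,0], [0,0,0,0,- 1,0,1,0,- 1,0,1,0]),
    ([0,0,0,0,0,1,0,- 1,0,- 1,0,1], [0,1,0,0,0,0,0,0,0,0,0,0,0,1,0,0], [0,0,0,0,0,0,0,0,0,1,1,- 2]),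
    ([0,- 1,0,1,0,- 1,0,1,0,0,0,0], [1,0,1,1,0,0,0,0,0,0,0,1,0,0,0,1], [0,0,- 1,1,0,0,0,0,0,0,0,0]),
    ([0,0,0,0,0,1,- 1,0,0,- 1,0,0], [0,1,0,0,- 1,1,- 1,0,- 1,1,- 1,0,0,0,0,0], [0,0,0,0,- 1,- 1,1,0,- 1,- 1,1,0]),
    ([0,0,1,- 1,0,0,1,- 1,0,0,0,0], [1,1,2,1,0,0,0,0,0,0,0,1,0,1,1,1], [0,0,- 1,1,0,0,0,0,0,0,0,0]),
    ([0,1,0,0,0,1,0,0,0,0,0,0], [1,- 1,0,1,0,0,0,1,0,0,0,1,0,- 1,- 1,0], [0,0,0,0,1,0,- 1,1,1,0,- 1,1]),
    ([0,0,0,1,0,- 1,1,0,0,0,0,0], [1,0,1,1,0,0,0,0,1,0,1,1,1,0,1,1], [0,- 1,1,0,0,0,0,0,0,0,0,0])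
  ]"


definition S444 :: "(int list \<times> int list \<times> int list) list" where
  "S444 = [
    ([1,0,0,0,- 1,0,0,0,- 1,0,0,0,1,0,0,0], [1,0,0,0,- 1,0,0,0,- 1,0,0,0,1,0,0,0], [0,0,0,0,0,0,0,0,0,0,0,0,1,1,1,1]),
    ([0,- 1,0,0,0,0,0,0,0,1,0,0,0,0,0,0], [0,0,0,0,0,1,0,0,0,0,0,0,0,- 1,0,0], [0,0,0,0,0,0,0,0,0,1,0,1,0,0,0,0]),
    ([- 1,0,0,0,0,0,0,0,1,0,0,0,0,0,0,0], [0,1,0,0,0,0,0,0,0,- 1,0,0,0,0,0,0], [0,0,0,0,0,0,0,0,1,1,1,1,1,1,1,1]),
    ([- 1,0,0,0,1,1,0,0,1,0,0,0,- 1,- 1,0,0], [- 1,1,0,0,1,0,0,0,1,- 1,0,0,- 1,0,0,0], [0,0,0,0,0,0,0,0,- 1,0,- 1,0,- 1,- 1,- 1,- 1]),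
    ([0,0,0,0,0,- 1,0,0,0,0,0,0,0,1,0,0], [- 1,1,0,0,1,- 1,0,0,1,- 1,0,0,- 1,1,0,0], [0,0,0,0,0,0,0,0,0,0,0,0,0,- 1,0,- 1]),
    ([- 1,- 1,0,0,1,1,0,0,1,1,0,0,- 1,- 1,0,0], [0,0,0,0,1,0,0,0,0,0,0,0,- 1,0,0,0], [0,0,0,0,0,0,0,0,1,0,1,0,0,0,0,0]),
    ([0,0,0,0,1,1,0,0,0,0,0,0,- 1,- 1,0,0], [1,- 1,0,0,0,0,0,0,- 1,1,0,0,0,0,0,0], [0,0,0,0,0,0,0,0,- 1,0,- 1,0,- 1,0,- 1,0]),
    ([0,0,- 1,0,0,0,1,0,0,0,0,0,0,0,0,0], [0,0,0,0,0,0,0,0,0,0,1,0,0,0,- 1,0], [0,0,0,0,0,0,1,1,0,0,0,0,0,0,0,0]),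
    ([0,0,0,1,0,0,0,0,0,0,0,0,0,0,0,0], [0,0,0,0,0,0,0,0,0,0,0,0,0,0,0,1], [0,0,0,1,0,0,0,0,0,0,0,0,0,0,0,0]),
    ([0,0,1,0,0,0,0,0,0,0,0,0,0,0,0,0], [0,0,0,0,0,0,0,0,0,0,0,1,0,0,0,0], [0,0,1,1,0,0,1,1,0,0,0,0,0,0,0,0]),
    ([0,0,1,0,0,0,- 1,- 1,0,0,0,0,0,0,0,0], [0,0,0,0,0,0,0,0,0,0,- 1,1,0,0,1,0], [0,0,- 1,0,0,0,- 1,- 1,0,0,0,0,0,0,0,0]),
    ([0,0,0,0,0,0,0,1,0,0,0,0,0,0,0,0], [0,0,0,0,0,0,0,0,0,0,- 1,1,0,0,1,- 1], [0,0,0,0,0,0,0,- 1,0,0,0,0,0,0,0,0]),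
    ([0,0,1,1,0,0,- 1,- 1,0,0,0,0,0,0,0,0], [0,0,0,0,0,0,0,0,0,0,0,0,0,0,1,0], [0,0,1,0,0,0,0,0,0,0,0,0,0,0,0,0]),
    ([0,0,0,0,0,0,- 1,- 1,0,0,0,0,0,0,0,0], [0,0,0,0,0,0,0,0,0,0,1,- 1,0,0,0,0], [0,0,- 1,0,0,0,- 1,0,0,0,0,0,0,0,0,0]),
    ([- 1,0,0,0,1,0,0,0,0,0,0,0,0,0,0,0], [0,0,1,0,0,0,- 1,0,0,0,0,0,0,0,0,0], [0,0,0,0,1,1,1,1,0,0,0,0,1,1,1,1]),
    ([0,1,0,0,0,0,0,0,0,0,0,0,0,0,0,0], [0,0,0,0,0,0,0,1,0,0,0,0,0,0,0,0], [0,1,0,1,0,0,0,0,0,1,0,1,0,0,0,0]),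
    ([1,0,0,0,0,0,0,0,0,0,0,0,0,0,0,0], [0,0,0,1,0,0,0,0,0,0,0,0,0,0,0,0], [1,1,1,1,1,1,1,1,1,1,1,1,1,1,1,1]),
    ([1,0,0,0,- 1,- 1,0,0,0,0,0,0,0,0,0,0], [0,0,- 1,1,0,0,1,0,0,0,0,0,0,0,0,0], [- 1,0,- 1,0,- 1,- 1,- 1,- 1,- 1,0,- 1,0,- 1,- 1,- 1,- 1]),
    ([0,0,0,0,0,1,0,0,0,0,0,0,0,0,0,0], [0,0,- 1,1,0,0,1,- 1,0,0,0,0,0,0,0,0], [0,0,0,0,0,- 1,0,- 1,0,0,0,0,0,- 1,0,- 1]),
    ([1,1,0,0,- 1,- 1,0,0,0,0,0,0,0,0,0,0], [0,0,0,0,0,0,1,0,0,0,0,0,0,0,0,0], [1,0,1,0,0,0,0,0,1,0,1,0,0,0,0,0]),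
    ([0,0,0,0,- 1,- 1,0,0,0,0,0,0,0,0,0,0], [0,0,1,- 1,0,0,0,0,0,0,0,0,0,0,0,0], [- 1,0,- 1,0,- 1,0,- 1,0,- 1,0,- 1,0,- 1,0,- 1,0]),
    ([- 1,0,0,0,1,0,0,0,1,0,1,0,- 1,0,- 1,0], [- 1,0,1,0,1,0,- 1,0,1,0,0,0,- 1,0,0,0], [0,0,0,0,- 1,- 1,0,0,0,0,0,0,- 1,- 1,- 1,- 1]),
    ([0,1,0,0,0,0,0,0,0,- 1,0,- 1,0,0,0,0], [0,0,0,0,0,- 1,0,1,0,0,0,0,0,1,0,0], [0,- 1,0,0,0,0,0,0,0,- 1,0,- 1,0,0,0,0]),
    ([1,0,0,0,0,0,0,0,- 1,0,- 1,0,0,0,0,0], [0,- 1,0,1,0,0,0,0,0,1,0,0,0,0,0,0], [- 1,- 1,0,0,- 1,- 1,0,0,- 1,- 1,- 1,- 1,- 1,- 1,- 1,- 1]),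
    ([1,0,0,0,- 1,- 1,0,0,- 1,0,- 1,0,1,1,1,1], [1,- 1,- 1,1,- 1,0,1,0,- 1,1,0,0,1,0,0,0], [1,0,0,0,1,1,0,0,1,0,1,0,1,1,1,1]),
    ([0,0,0,0,0,1,0,0,0,0,0,0,0,- 1,0,- 1], [1,- 1,- 1,1,- 1,1,1,- 1,- 1,1,0,0,1,- 1,0,0], [0,0,0,0,0,1,0,0,0,0,0,0,0,1,0,1]),
    ([1,1,0,0,- 1,- 1,0,0,- 1,- 1,- 1,- 1,1,1,1,1], [0,0,0,0,- 1,0,1,0,0,0,0,0,1,0,0,0], [- 1,0,0,0,0,0,0,0,- 1,0,- 1,0,0,0,0,0]),
    ([0,0,0,0,- 1,- 1,0,0,0,0,0,0,1,1,1,1], [- 1,1,1,- 1,0,0,0,0,1,- 1,0,0,0,0,0,0], [1,0,0,0,1,0,0,0,1,0,1,0,1,0,1,0]),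
    ([0,0,0,0,0,0,0,0,0,0,- 1,0,0,0,1,0], [- 1,0,1,0,1,0,- 1,0,1,0,- 1,0,- 1,0,1,0], [0,0,0,0,0,0,0,0,0,0,0,0,0,0,- 1,- 1]),
    ([0,0,0,0,0,0,0,0,0,0,0,1,0,0,0,0], [0,0,0,0,0,- 1,0,1,0,0,0,0,0,1,0,- 1], [0,0,0,0,0,0,0,0,0,0,0,- 1,0,0,0,0]),
    ([0,0,0,0,0,0,0,0,0,0,1,0,0,0,0,0], [0,- 1,0,1,0,0,0,0,0,1,0,- 1,0,0,0,0], [0,0,0,0,0,0,0,0,0,0,- 1,- 1,0,0,- 1,- 1]),
    ([0,0,0,0,0,0,0,0,0,0,1,0,0,0,- 1,- 1], [1,- 1,- 1,1,- 1,0,1,0,- 1,1,1,- 1,1,0,- 1,0], [0,0,0,0,0,0,0,0,0,0,1,0,0,0,1,1]),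
    ([0,0,0,0,0,0,0,0,0,0,0,0,0,0,0,1], [1,- 1,- 1,1,- 1,1,1,- 1,- 1,1,1,- 1,1,- 1,- 1,1], [0,0,0,0,0,0,0,0,0,0,0,0,0,0,0,1]),
    ([0,0,0,0,0,0,0,0,0,0,1,1,0,0,- 1,- 1], [0,0,0,0,- 1,0,1,0,0,0,0,0,1,0,- 1,0], [0,0,0,0,0,0,0,0,0,0,- 1,0,0,0,0,0]),
    ([0,0,0,0,0,0,0,0,0,0,0,0,0,0,- 1,- 1], [- 1,1,1,- 1,0,0,0,0,1,- 1,- 1,1,0,0,0,0], [0,0,0,0,0,0,0,0,0,0,1,0,0,0,1,0]),
    ([- 1,0,- 1,0,1,0,1,0,1,0,1,0,- 1,0,- 1,0], [0,0,0,0,0,0,0,0,1,0,0,0,- 1,0,0,0], [0,0,0,0,1,1,0,0,0,0,0,0,0,0,0,0]),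
    ([0,1,0,1,0,0,0,0,0,- 1,0,- 1,0,0,0,0], [0,0,0,0,0,0,0,0,0,0,0,0,0,1,0,0], [0,1,0,0,0,0,0,0,0,0,0,0,0,0,0,0]),
    ([1,0,1,0,0,0,0,0,- 1,0,- 1,0,0,0,0,0], [0,0,0,0,0,0,0,0,0,1,0,0,0,0,0,0], [1,1,0,0,1,1,0,0,0,0,0,0,0,0,0,0]),
    ([1,0,1,0,- 1,- 1,- 1,- 1,- 1,0,- 1,0,1,1,1,1], [0,0,0,0,0,0,0,0,- 1,1,0,0,1,0,0,0], [- 1,0,0,0,- 1,- 1,0,0,0,0,0,0,0,0,0,0]),
    ([0,0,0,0,0,1,0,1,0,0,0,0,0,- 1,0,- 1], [0,0,0,0,0,0,0,0,- 1,1,0,0,1,- 1,0,0], [0,0,0,0,0,- 1,0,0,0,0,0,0,0,0,0,0]),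
    ([1,1,1,1,- 1,- 1,- 1,- 1,- 1,- 1,- 1,- 1,1,1,1,1], [0,0,0,0,0,0,0,0,0,0,0,0,1,0,0,0], [1,0,0,0,0,0,0,0,0,0,0,0,0,0,0,0]),
    ([0,0,0,0,- 1,- 1,- 1,- 1,0,0,0,0,1,1,1,1], [0,0,0,0,0,0,0,0,1,- 1,0,0,0,0,0,0], [- 1,0,0,0,- 1,0,0,0,0,0,0,0,0,0,0,0]),
    ([0,0,0,0,0,0,0,0,1,0,1,0,- 1,0,- 1,0], [1,0,- 1,0,- 1,0,1,0,0,0,0,0,0,0,0,0], [0,0,0,0,- 1,- 1,0,0,0,0,0,0,- 1,- 1,0,0]),
    ([0,0,0,0,0,0,0,0,0,- 1,0,- 1,0,0,0,0], [0,0,0,0,0,1,0,- 1,0,0,0,0,0,0,0,0], [0,- 1,0,0,0,0,0,0,0,- 1,0,0,0,0,0,0]),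
    ([0,0,0,0,0,0,0,0,- 1,0,- 1,0,0,0,0,0], [0,1,0,- 1,0,0,0,0,0,0,0,0,0,0,0,0], [- 1,- 1,0,0,- 1,- 1,0,0,- 1,- 1,0,0,- 1,- 1,0,0]),
    ([0,0,0,0,0,0,0,0,- 1,0,- 1,0,1,1,1,1], [- 1,1,1,- 1,1,0,- 1,0,0,0,0,0,0,0,0,0], [1,0,0,0,1,1,0,0,1,0,0,0,1,1,0,0]),
    ([0,0,0,0,0,0,0,0,0,0,0,0,0,- 1,0,- 1], [- 1,1,1,- 1,1,- 1,- 1,1,0,0,0,0,0,0,0,0], [0,0,0,0,0,1,0,0,0,0,0,0,0,1,0,0]),
    ([0,0,0,0,0,0,0,0,- 1,- 1,- 1,- 1,1,1,1,1], [0,0,0,0,1,0,- 1,0,0,0,0,0,0,0,0,0], [- 1,0,0,0,0,0,0,0,- 1,0,0,0,0,0,0,0]),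
    ([0,0,0,0,0,0,0,0,0,0,0,0,1,1,1,1], [1,- 1,- 1,1,0,0,0,0,0,0,0,0,0,0,0,0], [1,0,0,0,1,0,0,0,1,0,0,0,1,0,0,0])
  ]"


lemma cyc:
  assumes "bilinear_mm_algorithm n m p r al be ga"
  shows "bilinear_mm_algorithm m p n r (\<lambda>k x y. be k x y) (\<lambda>k y z. ga k z y) (\<lambda>k x z. al k z x)"
  unfolding bilinear_mm_algorithm_def
proof (intro allI impI)
  fix i l i' j j' l'
  assume h: "i < m" "l < n" "i' < m" "j < p" "j' < p" "l' < n"
  have e: "(\<Sum>k<r. ga k l' j' * al k l i * be k i' j) = (if l = l' \<and> i = i' \<and> j' = j then 1 else 0)"
    using assms[unfolded bilinear_mm_algorithm_def, rule_format, of l' j' l i i' j] h by simp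
  have "(\<Sum>k<r. al k l i * be k i' j * ga k l' j') = (\<Sum>k<r. ga k l' j' * al k l i * be k i' j)"
    by (simp add: ac_simps)
  also have "\<dots> = (if i' = i \<and> j = j' \<and> l' = l then 1 else 0)"
    unfolding e by auto
  finally show "(\<Sum>k<r. al k l i * be k i' j * ga k l' j') = (if i' = i \<and> j = j' \<and> l' = l then 1 else 0)" .
qed

lemma all7: "(\<forall>k<(7::nat). P k) \<longleftrightarrow> P 0 \<and> P 1 \<and> P 2 \<and> P 3 \<and> P 4 \<and> P 5 \<and> P 6"
  by (simp add: numeral_eq_Suc less_Suc_eq all_conj_distrib)

lemma all2: "(\<forall>k<(2::nat). P k) \<longleftrightarrow> P 0 \<and> P 1"
  by (auto simp: less_Suc_eq numeral_2_eq_2)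

lemma chk2: "check 2 2 2 S2" unfolding S2_def by code_simp
lemma chk334: "check 3 3 4 S334" unfolding S334_def by code_simp
lemma chk344: "check 3 4 4 S344" unfolding S344_def by code_simp
lemma chk444: "check 4 4 4 S444" unfolding S444_def by code_simp

lemma len2: "length S2 = 7" by (simp add: S2_def)
lemma len334: "length S334 = 29" by (simp add: S334_def)
lemma len344: "length S344 = 38" by (simp add: S344_def)
lemma len444: "length S444 = 49" by (simp add: S444_def)


definition Pk :: "nat \<Rightarrow> nat" where "Pk k = [3,4,4,4,3,4,3] ! k"
definition Qk :: "nat \<Rightarrow> nat" where "Qk k = [4,3,4,3,4,4,3] ! k"
definition Rk :: "nat \<Rightarrow> nat" where "Rk k = [3,4,3,3,4,4,4] ! k"
definition rk :: "nat \<Rightarrow> nat" where "rk k = [29,38,38,29,38,49,29] ! k"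

definition bI :: "nat \<Rightarrow> nat" where "bI g = (if g < 3 then 0 else 1)"
definition oI :: "nat \<Rightarrow> nat" where "oI g = (if g < 3 then g else g - 3)"
definition sI :: "nat \<Rightarrow> nat" where "sI b = (if b = 0 then 3 else 4)"
definition bL :: "nat \<Rightarrow> nat" where "bL g = (if g < 4 then 0 else 1)"
definition oL :: "nat \<Rightarrow> nat" where "oL g = (if g < 4 then g else g - 4)"
definition sL :: "nat \<Rightarrow> nat" where "sL b = (if b = 0 then 4 else 3)"

definition dk :: "nat \<Rightarrow> nat" where
  "dk K = (if K < 29 then 0 else if K < 67 then 1 else if K < 105 then 2 else if K < 134 then 3
     else if K < 172 then 4 else if K < 221 then 5 else 6)"
definition dm :: "nat \<Rightarrow> nat" where
  "dm K = K - (\<Sum>k'<dk K. rk k')"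

definition ai :: "nat \<Rightarrow> nat \<Rightarrow> nat \<Rightarrow> nat \<Rightarrow> 'k::field" where
  "ai k = (if k = 0 then (\<lambda>m x y. bet S334 4 m x y)
      else if k = 1 then (\<lambda>m x y. gam S344 4 m y x)
      else if k = 2 then (\<lambda>m x y. bet S344 4 m x y)
      else if k = 3 then (\<lambda>m x y. gam S334 4 m y x)
      else if k = 4 then alp S344 4
      else if k = 5 then alp S444 4
      else alp S334 3)"
definition bi :: "nat \<Rightarrow> nat \<Rightarrow> nat \<Rightarrow> nat \<Rightarrow> 'k::field" where
  "bi k = (if k = 0 then (\<lambda>m y z. gam S334 4 m z y)
      else if k = 1 then (\<lambda>m y z. alp S344 4 m y z)
      else if k = 2 then (\<lambda>m y z. gam S344 4 m z y)
      else if k = 3 then (\<lambda>m y z. alp S334 3 m y z)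
      else if k = 4 then bet S344 4
      else if k = 5 then bet S444 4
      else bet S334 4)"
definition gi :: "nat \<Rightarrow> nat \<Rightarrow> nat \<Rightarrow> nat \<Rightarrow> 'k::field" where
  "gi k = (if k = 0 then (\<lambda>m x z. alp S334 3 m z x)
      else if k = 1 then (\<lambda>m x z. bet S344 4 m z x)
      else if k = 2 then (\<lambda>m x z. alp S344 4 m z x)
      else if k = 3 then (\<lambda>m x z. bet S334 4 m z x)
      else if k = 4 then gam S344 4
      else if k = 5 then gam S444 4
      else gam S334 4)"

lemma base334: "bilinear_mm_algorithm 3 3 4 29 (alp S334 3) (bet S334 4) (gam S334 4 :: nat \<Rightarrow> nat \<Rightarrow> nat \<Rightarrow> 'k::field)"
  using check_sound[OF chk334] by (simp add: len334)
lemma base344: "bilinear_mm_algorithm 3 4 4 38 (alp S344 4) (bet S344 4) (gam S344 4 :: nat \<Rightarrow> nat \<Rightarrow> nat \<Rightarrow> 'k::field)"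
  using check_sound[OF chk344] by (simp add: len344)
lemma base444: "bilinear_mm_algorithm 4 4 4 49 (alp S444 4) (bet S444 4) (gam S444 4 :: nat \<Rightarrow> nat \<Rightarrow> nat \<Rightarrow> 'k::field)"
  using check_sound[OF chk444] by (simp add: len444)
lemma base2: "bilinear_mm_algorithm 2 2 2 7 (alp S2 2) (bet S2 2) (gam S2 2 :: nat \<Rightarrow> nat \<Rightarrow> nat \<Rightarrow> 'k::field)"
  using check_sound[OF chk2] by (simp add: len2)

lemma inner_all: "\<forall>k<7. bilinear_mm_algorithm (Pk k) (Qk k) (Rk k) (rk k) (ai k) (bi k) (gi k :: nat \<Rightarrow> nat \<Rightarrow> nat \<Rightarrow> 'k::field)"
proof -
  note c334 = cyc[OF base334]
  note cc334 = cyc[OF c334]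
  note c344 = cyc[OF base344]
  note cc344 = cyc[OF c344]
  show ?thesis unfolding all7
    using c334 cc334 c344 cc344 base334 base344 base444
    by (simp add: Pk_def Qk_def Rk_def rk_def ai_def bi_def gi_def)
qed

lemma rI: "\<forall>g<7. bI g < 2 \<and> oI g < sI (bI g)" by (auto simp: bI_def oI_def sI_def)
lemma iI: "\<forall>g<7. \<forall>g'<7. bI g = bI g' \<and> oI g = oI g' \<longrightarrow> g = g'" by (auto simp: bI_def oI_def split: if_splits)
lemma rL: "\<forall>g<7. bL g < 2 \<and> oL g < sL (bL g)" by (auto simp: bL_def oL_def sL_def)
lemma iL: "\<forall>g<7. \<forall>g'<7. bL g = bL g' \<and> oL g = oL g' \<longrightarrow> g = g'" by (auto simp: bL_def oL_def split: if_splits)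

lemma HI: "\<forall>k<7. \<forall>I<2. \<forall>I'<2. \<forall>J<2. \<forall>L<2. (alp S2 2 k I' J :: 'k::field) \<noteq> 0 \<longrightarrow> (gam S2 2 k I L :: 'k) \<noteq> 0 \<longrightarrow> min (sI I) (sI I') \<le> Pk k"
  unfolding all7 all2 by (simp add: alp_def gam_def vv_def S2_def Pk_def sI_def)
lemma HJ: "\<forall>k<7. \<forall>J<2. \<forall>J'<2. \<forall>I<2. \<forall>L<2. (alp S2 2 k I J :: 'k::field) \<noteq> 0 \<longrightarrow> (bet S2 2 k J' L :: 'k) \<noteq> 0 \<longrightarrow> min (sI J) (sI J') \<le> Qk k"
  unfolding all7 all2 by (simp add: alp_def bet_def vv_def S2_def Qk_def sI_def)
lemma HL: "\<forall>k<7. \<forall>L<2. \<forall>L'<2. \<forall>I<2. \<forall>J<2. (bet S2 2 k J L' :: 'k::field) \<noteq> 0 \<longrightarrow> (gam S2 2 k I L :: 'k) \<noteq> 0 \<longrightarrow> min (sL L) (sL L') \<le> Rk k"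
  unfolding all7 all2 by (simp add: bet_def gam_def vv_def S2_def Rk_def sL_def)

lemma dec: "\<forall>k<7. \<forall>m<rk k. dk ((\<Sum>k'<k. rk k') + m) = k \<and> dm ((\<Sum>k'<k. rk k') + m) = m"
  unfolding all7 by (simp add: rk_def dk_def dm_def numeral_eq_Suc)

lemma total: "(\<Sum>k<7. rk k) = 250"
  by (simp add: rk_def numeral_eq_Suc)

theorem mainTheorem2:
  shows "mm_rank TYPE('k::field) 7 7 7 \<le> 250"
proof -
  have "bilinear_mm_algorithm 7 7 7 (\<Sum>k<7. rk k)
    (\<lambda>K g1 g2. alp S2 2 (dk K) (bI g1) (bI g2) * (if oI g1 < Pk (dk K) \<and> oI g2 < Qk (dk K) then ai (dk K) (dm K) (oI g1) (oI g2) else 0))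
    (\<lambda>K g2 g3. bet S2 2 (dk K) (bI g2) (bL g3) * (if oI g2 < Qk (dk K) \<and> oL g3 < Rk (dk K) then bi (dk K) (dm K) (oI g2) (oL g3) else 0))
    (\<lambda>K g1 g3. gam S2 2 (dk K) (bI g1) (bL g3) * (if oI g1 < Pk (dk K) \<and> oL g3 < Rk (dk K) then gi (dk K) (dm K) (oI g1) (oL g3) else (0::'k)))"
    by (rule compose[OF base2 inner_all rI iI rI iI rL iL HI HJ HL dec])
  then have "\<exists>(alpha::nat \<Rightarrow> nat \<Rightarrow> nat \<Rightarrow> 'k) beta gamma. bilinear_mm_algorithm 7 7 7 250 alpha beta gamma"
    unfolding total by blast
  then show ?thesis unfolding mm_rank_def by (rule Least_le)
qed

end
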